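(* Let $A_1,A_2$ be two stochastic undirected $n\times n$ matrices. Then the switched system $x(t+1)=A_{\sigma(t)}x(t)$, $x(0)=x_0$, converges to a multiple of $\mathbf{1}$ for every $x_0\in\mathbb{R}^n$ and every sequence $\sigma:\mathbb{N}\to\{1,2\}$ if and only if it converges to a multiple of $\mathbf{1}$ for every $x_0\in\mathbb{R}^n$ under each of the three sequences $\sigma_1=1,1,1,\dots$, $\sigma_2=2,2,2,\dots$ and $\sigma_3=1,2,1,2,\dots$.
   Context: $\mathbf{1}=(1,\dots,1)^\top$. A stochastic matrix is a nonnegative matrix whose rows sum to $1$. A nonnegative matrix $A=(a_{ij})$ is undirected if $a_{ij}>0 \Leftrightarrow a_{ji}>0$ for all $i,j$. *)

theory Defs
  imports "HOL-Analysis.Analysis"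
begin

definition stochastic :: "real^'n^'n \<Rightarrow> bool" where
  "stochastic A \<longleftrightarrow> (\<forall>i j. A $ i $ j \<ge> 0) \<and> (\<forall>i. (\<Sum>j\<in>UNIV. A $ i $ j) = 1)"

definition undirected :: "real^'n^'n \<Rightarrow> bool" where
  "undirected A \<longleftrightarrow> (\<forall>i j. A $ i $ j > 0 \<longleftrightarrow> A $ j $ i > 0)"

fun traj :: "(nat \<Rightarrow> real^'n^'n) \<Rightarrow> (nat \<Rightarrow> nat) \<Rightarrow> real^'n \<Rightarrow> nat \<Rightarrow> real^'n" where
  "traj A \<sigma> x0 0 = x0"
| "traj A \<sigma> x0 (Suc t) = A (\<sigma> t) *v traj A \<sigma> x0 t"

definition consensus_under :: "(nat \<Rightarrow> real^'n^'n) \<Rightarrow> (nat \<Rightarrow> nat) \<Rightarrow> bool" where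
  "consensus_under A \<sigma> \<longleftrightarrow>
     (\<forall>x0. \<exists>c::real. traj A \<sigma> x0 \<longlonglongrightarrow> c *\<^sub>R (1 :: real^'n))"

end

theory Submission
  imports Defs
begin


definition hascol :: "('a \<Rightarrow> 'a \<Rightarrow> bool) \<Rightarrow> bool" where
  "hascol X \<longleftrightarrow> (\<exists>j. \<forall>i. X i j)"
definition serial :: "('a \<Rightarrow> 'a \<Rightarrow> bool) \<Rightarrow> bool" where
  "serial X \<longleftrightarrow> (\<forall>i. \<exists>j. X i j)"

lemma hascol_left: "serial R \<Longrightarrow> hascol X \<Longrightarrow> hascol (R OO X)"
  unfolding hascol_def serial_def by blast
lemma hascol_right: "hascol X \<Longrightarrow> serial R \<Longrightarrow> hascol (X OO R)"
  unfolding hascol_def serial_def by blast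
lemma hascol_mono: "X \<le> Y \<Longrightarrow> hascol X \<Longrightarrow> hascol Y"
  unfolding hascol_def by blast
lemma serial_comp: "serial R \<Longrightarrow> serial S \<Longrightarrow> serial (R OO S)"
  unfolding serial_def by blast
lemma serial_eq: "serial (=)" unfolding serial_def by blast
lemma refl_sq: "symp R \<Longrightarrow> serial R \<Longrightarrow> (=) \<le> R OO R"
  unfolding serial_def symp_def by blast
lemma relpowp_le: fixes R :: "'a \<Rightarrow> 'a \<Rightarrow> bool" shows "R \<le> S \<Longrightarrow> R ^^ n \<le> S ^^ n"
  by (induction n) (auto simp: relcompp_mono relpowp.simps)
lemma relpowp_relpowp: fixes R :: "'a \<Rightarrow> 'a \<Rightarrow> bool" shows "(R ^^ k) ^^ m = R ^^ (k * m)"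
  by (induction m) (simp_all add: relpowp.simps relpowp_add[symmetric] add.commute)
lemma serial_pow: "serial R \<Longrightarrow> serial (R ^^ n)"
  by (induction n) (auto simp: relpowp.simps serial_eq serial_comp)
lemma hascol_pow_mono: "serial R \<Longrightarrow> hascol (R ^^ t) \<Longrightarrow> t \<le> t' \<Longrightarrow> hascol (R ^^ t')"
proof (induction t' )
  case 0 then show ?case by simp
next
  case (Suc t') then show ?case
    by (metis le_Suc_eq relpowp_Suc_left hascol_left)
qed
lemma fix_pow: "X OO Q = Q \<Longrightarrow> (X ^^ m) OO Q = Q"
  by (induction m) (simp_all add: relpowp.simps eq_OO relcompp_assoc)
lemma alt_pow: "(X OO Y) ^^ Suc t = X OO (Y OO X) ^^ t OO Y"
  proof (induction t)
  case 0 then show ?case by (simp add: relpowp.simps OO_eq eq_OO)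
next
  case (Suc t)
  have "(X OO Y) ^^ Suc (Suc t) = (X OO Y) OO (X OO Y) ^^ Suc t" by (rule relpowp_Suc_left)
  also have "\<dots> = X OO ((Y OO X) OO (Y OO X) ^^ t) OO Y" using Suc by (simp add: relcompp_assoc)
  also have "\<dots> = X OO (Y OO X) ^^ Suc t OO Y" by (simp add: relpowp_Suc_left[symmetric])
  finally show ?case .
qed


fun alt :: "bool \<Rightarrow> nat \<Rightarrow> bool list" where
  "alt a 0 = []" | "alt a (Suc n) = a # alt (\<not>a) n"

lemma alt_snoc: "alt a (Suc n) = alt a n @ [if even n then a else \<not>a]"
proof (induction n arbitrary: a)
  case 0 then show ?case by simp
next
  case (Suc n)
  have "alt a (Suc (Suc n)) = a # alt (\<not>a) (Suc n)" by (simp only: alt.simps)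
  also have "\<dots> = a # (alt (\<not>a) n @ [if even n then \<not>a else \<not>\<not>a])" using Suc by (simp only:)
  also have "\<dots> = alt a (Suc n) @ [if even (Suc n) then a else \<not>a]" by simp
  finally show ?case .
qed

lemma rev_alt: "rev (alt a n) = alt (if even n then \<not>a else a) n"
proof (induction n arbitrary: a)
  case 0 then show ?case by simp
next
  case (Suc n)
  have "rev (alt a (Suc n)) = alt (if even n then a else \<not>a) n @ [a]"
    using Suc[of "\<not>a"] by simp
  also have "\<dots> = alt (if even n then a else \<not>a) (Suc n)"
    by (simp only: alt_snoc) auto
  finally show ?case by simp
qed

lemma noadj_alt: "\<not>(\<exists>x a y. w = x @ a # a # y) \<Longrightarrow> w \<noteq> [] \<Longrightarrow> w = alt (hd w) (length w)"
proof (induction w)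
  case Nil then show ?case by simp
next
  case (Cons b w)
  show ?case
  proof (cases w)
    case Nil then show ?thesis by simp
  next
    case (Cons c u)
    have nb: "c \<noteq> b"
    proof
      assume "c = b"
      then have "b # w = [] @ b # b # u" using Cons by simp
      then show False using Cons.prems(1) by blast
    qed
    have "\<not>(\<exists>x a y. w = x @ a # a # y)"
    proof
      assume "\<exists>x a y. w = x @ a # a # y"
      then obtain x a y where "w = x @ a # a # y" by blast
      then have "b # w = (b # x) @ a # a # y" by simp
      then show False using Cons.prems(1) by blast
    qed
    then have "w = alt (hd w) (length w)" using Cons.IH Cons by simp
    then show ?thesis using nb Cons by (cases b; cases c) auto
  qed
qed

locale two_mat =
  fixes A1 A2 :: "real^'n::finite^'n"
  assumes s1: "stochastic A1" and u1: "undirected A1"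
    and s2: "stochastic A2" and u2: "undirected A2"
begin

definition AA :: "bool \<Rightarrow> real^'n^'n" where "AA b = (if b then A1 else A2)"
definition Rel :: "bool \<Rightarrow> 'n \<Rightarrow> 'n \<Rightarrow> bool" where "Rel b i j \<longleftrightarrow> AA b $ i $ j > 0"
definition PP :: "bool list \<Rightarrow> 'n \<Rightarrow> 'n \<Rightarrow> bool" where
  "PP w = foldr (\<lambda>b X. Rel b OO X) w (=)"

lemma AA_stoch: "stochastic (AA b)" using s1 s2 by (simp add: AA_def)
lemma AA_undir: "undirected (AA b)" using u1 u2 by (simp add: AA_def)

lemma stoch_serial: assumes "stochastic B" shows "\<exists>j. B $ i $ j > 0"
proof (rule ccontr)
  assume "\<not> ?thesis"
  then have "\<forall>j. B $ i $ j = 0" using assms unfolding stochastic_def by (meson linorder_neqE_linordered_idom not_le)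
  then have "(\<Sum>j\<in>UNIV. B $ i $ j) = 0" by simp
  then show False using assms unfolding stochastic_def by simp
qed

lemma Rel_serial: "serial (Rel b)"
  unfolding serial_def Rel_def using stoch_serial[OF AA_stoch] by blast
lemma Rel_symp: "symp (Rel b)"
  using AA_undir[of b] unfolding symp_def Rel_def undirected_def by blast

lemma PP_Nil[simp]: "PP [] = (=)" by (simp add: PP_def)
lemma PP_Cons[simp]: "PP (b # w) = Rel b OO PP w" by (simp add: PP_def)
lemma PP_append: "PP (x @ y) = PP x OO PP y"
  by (induction x) (simp_all add: eq_OO relcompp_assoc)
lemma PP_serial: "serial (PP w)"
  by (induction w) (simp_all add: serial_eq serial_comp Rel_serial)

lemma PP_rev: "(=) \<le> PP w OO PP (rev w)"
proof (induction w)
  case Nil then show ?case by (simp add: eq_OO)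
next
  case (Cons a w)
  have e: "PP (rev (a # w)) = PP (rev w) OO Rel a" by (simp add: PP_append OO_eq)
  show ?case
  proof (rule predicate2I)
    fix x y :: 'n assume "x = y"
    obtain z where z: "Rel a x z" using Rel_serial unfolding serial_def by blast
    then have z2: "Rel a z y" using Rel_symp \<open>x = y\<close> unfolding symp_def by blast
    have "(PP w OO PP (rev w)) z z" using Cons by blast
    then obtain u where "PP w z u" "PP (rev w) u z" by blast
    then show "(PP (a # w) OO PP (rev (a # w))) x y" using z z2 e by auto
  qed
qed

lemma PP_alt_even: "PP (alt a (2*k)) = (Rel a OO Rel (\<not>a)) ^^ k"
proof (induction k)
  case 0 then show ?case by (simp add: relpowp.simps)
next
  case (Suc k)
  have "alt a (2 * Suc k) = a # (\<not>a) # alt a (2*k)" by (simp add: numeral_2_eq_2)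
  then have "PP (alt a (2*Suc k)) = Rel a OO Rel (\<not>a) OO PP (alt a (2*k))" by simp
  also have "\<dots> = (Rel a OO Rel (\<not>a)) OO (Rel a OO Rel (\<not>a))^^k" using Suc by (simp only: relcompp_assoc)
  also have "\<dots> = (Rel a OO Rel (\<not>a))^^Suc k" by (rule relpowp_Suc_left[symmetric])
  finally show ?case .
qed

lemma core:
  assumes E2: "\<And>b. \<exists>T. \<forall>t\<ge>T. hascol (Rel b ^^ t)"
    and E3: "\<And>b. \<exists>T. \<forall>t\<ge>T. hascol ((Rel b OO Rel (\<not>b)) ^^ t)"
  shows "w \<noteq> [] \<Longrightarrow> \<exists>m. hascol (PP w ^^ m)"
proof (induction "length w" arbitrary: w rule: less_induct)
  case less
  show ?case
  proof (cases "\<exists>x a y. w = x @ a # a # y")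
    case True
    then obtain x a y where w: "w = x @ a # a # y" by blast
    show ?thesis
    proof (cases "x @ y = []")
      case True
      then have "PP w = Rel a ^^ 2" using w by (simp add: OO_eq eq_OO numeral_2_eq_2 relpowp.simps)
      moreover obtain T where "\<forall>t\<ge>T. hascol (Rel a ^^ t)" using E2 by blast
      ultimately have "hascol (PP w ^^ T)" by (simp add: relpowp_relpowp)
      then show ?thesis by blast
    next
      case False
      have "length (x @ y) < length w" using w by simp
      then obtain m where m: "hascol (PP (x @ y) ^^ m)" using less.hyps[of "x @ y"] False by blast
      have ew: "PP w = PP x OO (Rel a OO Rel a) OO PP y" using w by (simp add: PP_append relcompp_assoc)
      have "PP (x @ y) \<le> PP w"
      proof (rule predicate2I)
        fix p q assume "PP (x @ y) p q"
        then obtain r where r: "PP x p r" "PP y r q" by (auto simp: PP_append)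
        obtain z where z: "Rel a r z" using Rel_serial unfolding serial_def by blast
        then have z2: "Rel a z r" using Rel_symp unfolding symp_def by blast
        show "PP w p q" unfolding ew using r z z2 by blast
      qed
      then have "PP (x @ y) ^^ m \<le> PP w ^^ m" by (rule relpowp_le)
      then show ?thesis using m hascol_mono by blast
    qed
  next
    case False
    define a where "a = hd w"
    define n where "n = length w"
    have w: "w = alt a n" using noadj_alt[OF False less.prems] a_def n_def by simp
    show ?thesis
    proof (cases "even n")
      case True
      then obtain k where k: "n = 2 * k" by blast
      then have "k \<ge> 1" using less.prems n_def by (cases k) auto
      have P: "PP w = (Rel a OO Rel (\<not>a)) ^^ k" using PP_alt_even[of a k] by (simp add: w k)
      obtain T where T: "\<forall>t\<ge>T. hascol ((Rel a OO Rel (\<not>a)) ^^ t)" using E3 by blast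
      have "k * T \<ge> T" using \<open>k \<ge> 1\<close> by simp
      then have "hascol (PP w ^^ T)" using T by (simp add: P relpowp_relpowp)
      then show ?thesis by blast
    next
      case False
      have rw: "rev w = w" using rev_alt[of a n] False by (simp add: w)
      obtain u where u: "w = a # u" using w False by (cases n) auto
      have ew: "PP w OO PP w = Rel a OO (PP u OO PP (rev u)) OO Rel a"
      proof -
        have "PP w OO PP w = PP w OO PP (rev w)" using rw by simp
        also have "\<dots> = Rel a OO (PP u OO PP (rev u)) OO Rel a"
          using u by (simp add: PP_append relcompp_assoc OO_eq)
        finally show ?thesis .
      qed
      have "Rel a OO Rel a \<le> PP w OO PP w"
      proof (rule predicate2I)
        fix p q assume "(Rel a OO Rel a) p q"
        then obtain r where r: "Rel a p r" "Rel a r q" by blast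
        have "(PP u OO PP (rev u)) r r" using PP_rev[of u] by blast
        then show "(PP w OO PP w) p q" unfolding ew using r by blast
      qed
      moreover have "\<And>R::'n\<Rightarrow>'n\<Rightarrow>bool. R ^^ 2 = R OO R"
        by (simp add: numeral_2_eq_2 relpowp.simps eq_OO)
      ultimately have le: "Rel a ^^ 2 \<le> PP w ^^ 2" by simp
      obtain T where T: "\<forall>t\<ge>T. hascol (Rel a ^^ t)" using E2 by blast
      have "hascol ((Rel a ^^ 2) ^^ T)" using T by (simp add: relpowp_relpowp)
      then have "hascol ((PP w ^^ 2) ^^ T)" using relpowp_le[OF le] hascol_mono by blast
      then have "hascol (PP w ^^ (2 * T))" by (simp add: relpowp_relpowp)
      then show ?thesis by blast
    qed
  qed
qed

fun wd :: "(nat \<Rightarrow> bool) \<Rightarrow> nat \<Rightarrow> nat \<Rightarrow> bool list" where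
  "wd \<sigma> s 0 = []" | "wd \<sigma> s (Suc t) = \<sigma> (s + t) # wd \<sigma> s t"

lemma wd_add: "wd \<sigma> s (i + d) = wd \<sigma> (s + i) d @ wd \<sigma> s i"
  by (induction d) (simp_all add: add.assoc)
lemma length_wd: "length (wd \<sigma> s t) = t"
  by (induction t) auto

lemma window:
  assumes E2: "\<And>b. \<exists>T. \<forall>t\<ge>T. hascol (Rel b ^^ t)"
    and E3: "\<And>b. \<exists>T. \<forall>t\<ge>T. hascol ((Rel b OO Rel (\<not>b)) ^^ t)"
  shows "hascol (PP (wd \<sigma> s CARD('n \<Rightarrow> 'n \<Rightarrow> bool)))"
proof -
  define N where "N = CARD('n \<Rightarrow> 'n \<Rightarrow> bool)"
  define f where "f t = PP (wd \<sigma> s t)" for t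
  have key: "hascol (f N)" if ij: "i < j" "j \<le> N" "f i = f j" for i j
  proof -
    define d where "d = j - i"
    have j: "j = i + d" using ij d_def by simp
    have v: "wd \<sigma> (s + i) d \<noteq> []" using length_wd[of \<sigma> "s+i" d] ij d_def by auto
    have fj: "f j = PP (wd \<sigma> (s + i) d) OO f i" unfolding f_def j wd_add PP_append ..
    obtain m where m: "hascol (PP (wd \<sigma> (s + i) d) ^^ m)" using core[OF E2 E3 v] by blast
    have "f i = (PP (wd \<sigma> (s + i) d) ^^ m) OO f i"
      by (rule fix_pow[symmetric]) (use fj ij in simp)
    then have hi: "hascol (f i)" using hascol_right[OF m, of "f i"] PP_serial f_def by metis
    have "f N = PP (wd \<sigma> (s + i) (N - i)) OO f i"
      using ij unfolding f_def by (metis wd_add PP_append le_add_diff_inverse less_le_trans less_imp_le_nat)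
    then show ?thesis using hascol_left[OF PP_serial hi] by simp
  qed
  have "\<not> inj_on f {0..N}"
  proof
    assume "inj_on f {0..N}"
    then have "card {0..N} \<le> card (UNIV :: ('n \<Rightarrow> 'n \<Rightarrow> bool) set)"
      by (rule card_inj_on_le) auto
    then show False unfolding N_def by simp
  qed
  then obtain i j where "i \<in> {0..N}" "j \<in> {0..N}" "i \<noteq> j" "f i = f j"
    unfolding inj_on_def by blast
  then have "hascol (f N)" using key by (metis atLeastAtMost_iff linorder_neq_iff)
  then show ?thesis unfolding f_def N_def .
qed
end


lemma mm_nth: "(A ** B) $ i $ j = (\<Sum>k\<in>UNIV. A $ i $ k * B $ k $ j)"
  by (simp add: matrix_matrix_mult_def)
lemma mv_nth: "(A *v x) $ i = (\<Sum>k\<in>UNIV. A $ i $ k * x $ k)"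
  by (simp add: matrix_vector_mult_def)

lemma stoch_mult:
  fixes A B :: "real^'n::finite^'n"
  assumes "stochastic A" "stochastic B" shows "stochastic (A ** B)"
proof -
  have nn: "(A ** B) $ i $ j \<ge> 0" for i j
    using assms unfolding stochastic_def mm_nth by (auto intro!: sum_nonneg)
  have "(\<Sum>j\<in>UNIV. (A ** B) $ i $ j) = 1" for i
  proof -
    have "(\<Sum>j\<in>UNIV. (A ** B) $ i $ j) = (\<Sum>k\<in>UNIV. A $ i $ k * (\<Sum>j\<in>UNIV. B $ k $ j))"
      unfolding mm_nth by (simp add: sum_distrib_left) (rule sum.swap)
    also have "\<dots> = 1" using assms unfolding stochastic_def by simp
    finally show ?thesis .
  qed
  then show ?thesis using nn unfolding stochastic_def by blast
qed

lemma stoch_id: "stochastic (mat 1 :: real^'n::finite^'n)"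
  unfolding stochastic_def by (simp add: mat_def)

lemma pos_mult:
  fixes A B :: "real^'n::finite^'n"
  assumes "stochastic A" "stochastic B"
  shows "(A ** B) $ i $ j > 0 \<longleftrightarrow> (\<exists>k. A $ i $ k > 0 \<and> B $ k $ j > 0)"
proof -
  have nn: "\<And>k. A $ i $ k * B $ k $ j \<ge> 0" using assms unfolding stochastic_def by simp
  have "(A ** B) $ i $ j > 0 \<longleftrightarrow> (\<exists>k. A $ i $ k * B $ k $ j > 0)"
  proof
    assume "(A ** B) $ i $ j > 0"
    then show "\<exists>k. A $ i $ k * B $ k $ j > 0" unfolding mm_nth
      by (metis (no_types, lifting) less_eq_real_def nn sum_nonneg_eq_0_iff finite UNIV_I)
  next
    assume "\<exists>k. A $ i $ k * B $ k $ j > 0"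
    then show "(A ** B) $ i $ j > 0" unfolding mm_nth using nn
      by (metis (no_types, lifting) sum_pos2 finite UNIV_I)
  qed
  also have "\<dots> \<longleftrightarrow> (\<exists>k. A $ i $ k > 0 \<and> B $ k $ j > 0)"
    using assms unfolding stochastic_def by (metis mult_pos_pos zero_less_mult_pos less_eq_real_def mult_eq_0_iff)
  finally show ?thesis .
qed

definition mx :: "real^'n::finite \<Rightarrow> real" where "mx x = Max (range (\<lambda>i. x $ i))"
definition mn :: "real^'n::finite \<Rightarrow> real" where "mn x = Min (range (\<lambda>i. x $ i))"

lemma mx_ge: "x $ i \<le> mx x" unfolding mx_def by simp
lemma mn_le: "mn x \<le> x $ i" unfolding mn_def by simp
lemma mx_att: "\<exists>i. mx x = x $ i"
proof -
  have "Max (range (\<lambda>i. x $ i)) \<in> range (\<lambda>i. x $ i)" by (rule Max_in) auto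
  then obtain i where "Max (range (\<lambda>i. x $ i)) = x $ i" by blast
  then show ?thesis unfolding mx_def by blast
qed
lemma mn_att: "\<exists>i. mn x = x $ i"
proof -
  have "Min (range (\<lambda>i. x $ i)) \<in> range (\<lambda>i. x $ i)" by (rule Min_in) auto
  then obtain i where "Min (range (\<lambda>i. x $ i)) = x $ i" by blast
  then show ?thesis unfolding mn_def by blast
qed

lemma stoch_up:
  assumes "stochastic B" "\<forall>i. B $ i $ j \<ge> \<delta>" "\<delta> \<ge> 0"
  shows "mx x - (B *v x) $ i \<ge> \<delta> * (mx x - x $ j)"
proof -
  have "mx x - (B *v x) $ i = (\<Sum>k\<in>UNIV. B $ i $ k * (mx x - x $ k))"
    using assms(1) unfolding stochastic_def mv_nth
    by (simp add: right_diff_distrib sum_subtractf sum_distrib_right[symmetric])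
  also have "\<dots> \<ge> B $ i $ j * (mx x - x $ j)"
    by (rule member_le_sum) (use assms(1) mx_ge in \<open>auto simp: stochastic_def mx_ge intro!: mult_nonneg_nonneg\<close>)
  moreover have "B $ i $ j * (mx x - x $ j) \<ge> \<delta> * (mx x - x $ j)"
    using assms(2) mx_ge[of x j] by (simp add: mult_right_mono)
  ultimately show ?thesis by linarith
qed

lemma stoch_lo:
  assumes "stochastic B" "\<forall>i. B $ i $ j \<ge> \<delta>" "\<delta> \<ge> 0"
  shows "(B *v x) $ i - mn x \<ge> \<delta> * (x $ j - mn x)"
proof -
  have "(B *v x) $ i - mn x = (\<Sum>k\<in>UNIV. B $ i $ k * (x $ k - mn x))"
    using assms(1) unfolding stochastic_def mv_nth
    by (simp add: right_diff_distrib sum_subtractf sum_distrib_right[symmetric])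
  also have "\<dots> \<ge> B $ i $ j * (x $ j - mn x)"
    by (rule member_le_sum) (use assms(1) mn_le in \<open>auto simp: stochastic_def mn_le intro!: mult_nonneg_nonneg\<close>)
  moreover have "B $ i $ j * (x $ j - mn x) \<ge> \<delta> * (x $ j - mn x)"
    using assms(2) mn_le[of x j] by (simp add: mult_right_mono)
  ultimately show ?thesis by linarith
qed

lemma stoch_mx: "stochastic B \<Longrightarrow> mx (B *v x) \<le> mx x"
  using stoch_up[where \<delta>=0 and B=B and x=x] mx_att[of "B *v x"] by (force simp: stochastic_def)
lemma stoch_mn: "stochastic B \<Longrightarrow> mn (B *v x) \<ge> mn x"
  using stoch_lo[where \<delta>=0 and B=B and x=x] mn_att[of "B *v x"] by (force simp: stochastic_def)

lemma contr:
  assumes "stochastic B" "\<forall>i. B $ i $ j \<ge> \<delta>" "\<delta> \<ge> 0"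
  shows "mx (B *v x) - mn (B *v x) \<le> (1 - \<delta>) * (mx x - mn x)"
proof -
  obtain i1 where i1: "mx (B *v x) = (B *v x) $ i1" using mx_att by blast
  obtain i2 where i2: "mn (B *v x) = (B *v x) $ i2" using mn_att by blast
  show ?thesis using stoch_up[OF assms, where x=x and i=i1] stoch_lo[OF assms, where x=x and i=i2] i1 i2
    by (simp add: algebra_simps)
qed



context two_mat begin

definition AN :: "nat \<Rightarrow> real^'n^'n" where "AN k = (if k = 1 then A1 else A2)"
lemma AN_AA: "AN k = AA (k = 1)" by (simp add: AN_def AA_def)

fun W :: "(nat \<Rightarrow> bool) \<Rightarrow> nat \<Rightarrow> nat \<Rightarrow> real^'n^'n" where
  "W \<sigma> s 0 = mat 1" | "W \<sigma> s (Suc t) = AA (\<sigma> (s + t)) ** W \<sigma> s t"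

lemma W_stoch: "stochastic (W \<sigma> s t)"
  by (induction t) (simp_all add: stoch_id stoch_mult AA_stoch)

lemma W_pos: "W \<sigma> s t $ i $ j > 0 \<longleftrightarrow> PP (wd \<sigma> s t) i j"
proof (induction t arbitrary: i)
  case 0 then show ?case by (simp add: mat_def)
next
  case (Suc t) then show ?case
    by (simp add: pos_mult[OF AA_stoch W_stoch] Rel_def relcompp_apply)
qed

lemma traj_W: "traj AN \<sigma>' x0 (s + t) = W (\<lambda>t. \<sigma>' t = 1) s t *v traj AN \<sigma>' x0 s"
  by (induction t) (simp_all add: AN_AA matrix_vector_mul_assoc)

lemma lowb: "\<exists>a>0. a \<le> 1 \<and> (\<forall>b i j. AA b $ i $ j > 0 \<longrightarrow> a \<le> AA b $ i $ j)"
proof -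
  define S where "S = {AA b $ i $ j | b i j. AA b $ i $ j > 0}"
  have "S \<subseteq> (\<lambda>(b, i, j). AA b $ i $ j) ` UNIV" unfolding S_def
  proof (clarify)
    fix b i j assume "0 < AA b $ i $ j"
    show "AA b $ i $ j \<in> (\<lambda>(b, i, j). AA b $ i $ j) ` UNIV"
      by (rule image_eqI[where x="(b, i, j)"]) auto
  qed
  then have fS: "finite S" by (rule finite_subset) simp
  define a where "a = Min (insert 1 S)"
  have "a > 0" unfolding a_def using fS by (subst Min_gr_iff) (auto simp: S_def)
  moreover have "a \<le> 1" unfolding a_def using fS by simp
  moreover have "\<forall>b i j. AA b $ i $ j > 0 \<longrightarrow> a \<le> AA b $ i $ j"
    unfolding a_def using fS by (auto simp: S_def intro!: Min_le)
  ultimately show ?thesis by blast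
qed

lemma W_low:
  assumes a: "\<forall>b i j. AA b $ i $ j > 0 \<longrightarrow> a \<le> AA b $ i $ j" "0 < a"
  shows "W \<sigma> s t $ i $ j > 0 \<Longrightarrow> a ^ t \<le> W \<sigma> s t $ i $ j"
proof (induction t arbitrary: i)
  case 0 then show ?case by (simp add: mat_def split: if_splits)
next
  case (Suc t)
  then obtain k where k: "AA (\<sigma> (s + t)) $ i $ k > 0" "W \<sigma> s t $ k $ j > 0"
    using pos_mult[OF AA_stoch W_stoch] by auto
  have "a ^ Suc t = a * a ^ t" by simp
  also have "\<dots> \<le> AA (\<sigma> (s + t)) $ i $ k * W \<sigma> s t $ k $ j"
    using a k Suc.IH[OF k(2)] by (intro mult_mono) auto
  also have "\<dots> \<le> (\<Sum>l\<in>UNIV. AA (\<sigma> (s + t)) $ i $ l * W \<sigma> s t $ l $ j)"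
    by (rule member_le_sum) (use AA_stoch W_stoch in \<open>auto simp: stochastic_def\<close>)
  finally show ?case by (simp add: mm_nth)
qed

lemma conv:
  assumes H: "\<And>s. hascol (PP (wd (\<lambda>t. \<sigma>' t = 1) s N))"
  shows "consensus_under AN \<sigma>'"
  unfolding consensus_under_def
proof
  fix x0
  define \<sigma> where "\<sigma> = (\<lambda>t. \<sigma>' t = 1)"
  define x where "x t = traj AN \<sigma>' x0 t" for t
  obtain a where a: "a > 0" "a \<le> 1" "\<forall>b i j. AA b $ i $ j > 0 \<longrightarrow> a \<le> AA b $ i $ j"
    using lowb by blast
  define \<delta> where "\<delta> = a ^ N"
  have d0: "0 < \<delta>" "\<delta> \<le> 1" using a by (auto simp: \<delta>_def power_le_one)
  define m where "m t = mn (x t)" for t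
  define M where "M t = mx (x t)" for t
  define D where "D t = M t - m t" for t
  have xs: "x (Suc t) = AN (\<sigma>' t) *v x t" for t by (simp add: x_def)
  have ANs: "stochastic (AN k)" for k by (simp add: AN_AA AA_stoch)
  have minc: "incseq m" by (rule incseq_SucI) (simp add: m_def xs stoch_mn[OF ANs])
  have Mdec: "decseq M" by (rule decseq_SucI) (simp add: M_def xs stoch_mx[OF ANs])
  have Ddec: "decseq D" unfolding D_def decseq_def
    using minc Mdec by (simp add: incseq_def decseq_def) (smt (verit))
  have D0: "D t \<ge> 0" for t
    unfolding D_def m_def M_def using mx_ge[of "x t"] mn_le[of "x t"] by (meson order.trans diff_ge_0_iff_ge)
  have stepN: "D (t + N) \<le> (1 - \<delta>) * D t" for t
  proof -
    have xt: "x (t + N) = W \<sigma> t N *v x t" unfolding x_def \<sigma>_def by (rule traj_W)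
    obtain j where j: "\<forall>i. PP (wd \<sigma> t N) i j" using H[of t] unfolding hascol_def \<sigma>_def by blast
    have "\<forall>i. W \<sigma> t N $ i $ j \<ge> \<delta>"
      using j W_pos W_low[OF a(3) a(1)] unfolding \<delta>_def by blast
    then show ?thesis unfolding D_def M_def m_def xt
      using contr[OF W_stoch _ less_imp_le[OF d0(1)]] by blast
  qed
  have Dk: "D (k * N) \<le> (1 - \<delta>) ^ k * D 0" for k
  proof (induction k)
    case 0 then show ?case by simp
  next
    case (Suc k)
    have "D (Suc k * N) = D (k * N + N)" by (simp add: add.commute)
    also have "\<dots> \<le> (1 - \<delta>) * D (k * N)" by (rule stepN)
    also have "\<dots> \<le> (1 - \<delta>) * ((1 - \<delta>) ^ k * D 0)" using Suc d0 by (intro mult_left_mono) auto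
    finally show ?case by simp
  qed
  have Dlim: "D \<longlonglongrightarrow> 0"
  proof (rule LIMSEQ_I)
    fix r :: real assume r: "0 < r"
    have "(\<lambda>k. (1 - \<delta>) ^ k * D 0) \<longlonglongrightarrow> 0 * D 0"
      by (intro tendsto_mult tendsto_const LIMSEQ_realpow_zero) (use d0 in auto)
    then obtain k where k: "\<bar>(1 - \<delta>) ^ k * D 0\<bar> < r" using r LIMSEQ_D by fastforce
    show "\<exists>no. \<forall>n\<ge>no. norm (D n - 0) < r"
    proof (intro exI allI impI)
      fix n assume "k * N \<le> n"
      then have "D n \<le> D (k * N)" using Ddec by (simp add: decseq_def)
      then show "norm (D n - 0) < r" using Dk[of k] k D0[of n] by simp
    qed
  qed
  have mb: "\<forall>t. m t \<le> M 0"
  proof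
    fix t
    have "m t \<le> M t" using D0[of t] by (simp add: D_def)
    also have "M t \<le> M 0" using Mdec by (simp add: decseq_def)
    finally show "m t \<le> M 0" .
  qed
  obtain c where c: "m \<longlonglongrightarrow> c" using incseq_convergent[OF minc mb] by blast
  have "x \<longlonglongrightarrow> c *\<^sub>R (1 :: real^'n)"
  proof (rule vec_tendstoI)
    fix i
    have lo: "m t \<le> x t $ i" for t by (simp add: m_def mn_le)
    have hi: "x t $ i \<le> m t + D t" for t by (simp add: D_def M_def mx_ge)
    have "(\<lambda>t. m t + D t) \<longlonglongrightarrow> c + 0" by (intro tendsto_add c Dlim)
    then have "(\<lambda>t. x t $ i) \<longlonglongrightarrow> c"
      using tendsto_sandwich[of m "\<lambda>t. x t $ i" sequentially "\<lambda>t. m t + D t" c] lo hi c by simp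
    then show "(\<lambda>t. x t $ i) \<longlonglongrightarrow> (c *\<^sub>R (1 :: real^'n)) $ i" by (simp add: one_vec_def)
  qed
  then show "\<exists>c. traj AN \<sigma>' x0 \<longlonglongrightarrow> c *\<^sub>R (1 :: real^'n)" unfolding x_def by blast
qed

lemma mv_axis: "(B *v axis j 1) $ i = B $ i $ j"
  by (simp add: mv_nth axis_def if_distrib cong: if_cong)

lemma cons_col:
  assumes "consensus_under AN \<sigma>'"
  shows "\<exists>t. hascol (PP (wd (\<lambda>t. \<sigma>' t = 1) 0 t))"
proof -
  define \<sigma> where "\<sigma> = (\<lambda>t. \<sigma>' t = 1)"
  have tr: "traj AN \<sigma>' x0 t = W \<sigma> 0 t *v x0" for x0 t
    using traj_W[of \<sigma>' x0 0 t] unfolding \<sigma>_def by simp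
  have "\<forall>j. \<exists>c. traj AN \<sigma>' (axis j 1) \<longlonglongrightarrow> c *\<^sub>R (1 :: real^'n)"
    using assms unfolding consensus_under_def by blast
  then obtain c where c: "\<And>j. traj AN \<sigma>' (axis j 1) \<longlonglongrightarrow> c j *\<^sub>R (1 :: real^'n)" by metis
  have cij: "(\<lambda>t. W \<sigma> 0 t $ i $ j) \<longlonglongrightarrow> c j" for i j
    using tendsto_vec_nth[OF c[of j], of i] by (simp add: tr mv_axis one_vec_def)
  fix i0 :: 'n
  have "(\<lambda>t. \<Sum>j\<in>UNIV. W \<sigma> 0 t $ i0 $ j) \<longlonglongrightarrow> (\<Sum>j\<in>UNIV. c j)"
    by (intro tendsto_sum cij)
  moreover have "(\<lambda>t. \<Sum>j\<in>UNIV. W \<sigma> 0 t $ i0 $ j) = (\<lambda>t. 1)"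
    using W_stoch unfolding stochastic_def by auto
  ultimately have "(\<Sum>j\<in>UNIV. c j) = 1" using LIMSEQ_unique tendsto_const by metis
  then obtain j where j: "c j > 0"
    by (metis not_le sum_nonpos zero_neq_one order.antisym zero_le_one)
  have "\<forall>\<^sub>F t in sequentially. W \<sigma> 0 t $ i $ j > 0" for i
    using order_tendstoD(1)[OF cij j] .
  then have "\<forall>\<^sub>F t in sequentially. \<forall>i. W \<sigma> 0 t $ i $ j > 0"
    by (rule eventually_all_finite)
  then obtain T where "\<forall>i. W \<sigma> 0 T $ i $ j > 0" by (auto simp: eventually_sequentially)
  then have "hascol (PP (wd \<sigma> 0 T))" unfolding hascol_def using W_pos by blast
  then show ?thesis unfolding \<sigma>_def by blast
qed

lemma PP_rep: "PP (replicate t b) = Rel b ^^ t"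
  by (induction t) (simp_all add: relpowp_Suc_left relpowp.simps relpowp_commute)

lemma wd_const: "wd (\<lambda>_. b) s t = replicate t b"
  by (induction t) auto

lemma wd_alt: "wd even 0 (2 * k) = alt False (2 * k)"
proof (induction k)
  case 0 then show ?case by simp
next
  case (Suc k)
  have "wd even 0 (2 * Suc k) = even (Suc (2 * k)) # even (2 * k) # wd even 0 (2 * k)"
    by (simp add: numeral_2_eq_2)
  also have "\<dots> = False # True # alt False (2 * k)" using Suc by simp
  also have "\<dots> = alt False (2 * Suc k)" by (simp add: numeral_2_eq_2)
  finally show ?case .
qed

lemma wd_mono: "hascol (PP (wd \<sigma> 0 t)) \<Longrightarrow> t \<le> t' \<Longrightarrow> hascol (PP (wd \<sigma> 0 t'))"
proof (induction t')
  case 0 then show ?case by simp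
next
  case (Suc t') then show ?case
    by (metis le_Suc_eq PP_Cons wd.simps(2) hascol_left Rel_serial)
qed

theorem main:
  assumes C1: "consensus_under AN (\<lambda>_. 1)" and C2: "consensus_under AN (\<lambda>_. 2)"
    and C3: "consensus_under AN (\<lambda>t. if even t then 1 else 2)"
  shows "consensus_under AN \<sigma>'"
proof -
  have E2: "\<exists>T. \<forall>t\<ge>T. hascol (Rel b ^^ t)" for b
  proof -
    have "consensus_under AN (\<lambda>_. if b then 1 else 2)" using C1 C2 by (cases b) auto
    from cons_col[OF this] obtain t where "hascol (PP (wd (\<lambda>_. b) 0 t))"
      by (cases b) auto
    then have "hascol (Rel b ^^ t)" by (simp add: wd_const PP_rep)
    then show ?thesis using hascol_pow_mono[OF Rel_serial] by blast
  qed
  have E3F: "\<exists>T. \<forall>t\<ge>T. hascol ((Rel False OO Rel True) ^^ t)"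
  proof -
    have eq: "(\<lambda>t. (if even t then 1 else 2) = (1::nat)) = even" by auto
    from cons_col[OF C3] obtain t where t: "hascol (PP (wd (\<lambda>t. even t) 0 t))"
      unfolding eq by auto
    have "hascol (PP (wd (\<lambda>t. even t) 0 (2 * t)))" by (rule wd_mono[OF t]) simp
    then have "hascol ((Rel False OO Rel True) ^^ t)"
      using wd_alt[of t] PP_alt_even[of False t] by simp
    then show ?thesis using hascol_pow_mono[OF serial_comp[OF Rel_serial Rel_serial]] by blast
  qed
  have E3: "\<exists>T. \<forall>t\<ge>T. hascol ((Rel b OO Rel (\<not>b)) ^^ t)" for b
  proof (cases b)
    case False then show ?thesis using E3F by simp
  next
    case True
    obtain T where T: "\<forall>t\<ge>T. hascol ((Rel False OO Rel True) ^^ t)" using E3F by blast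
    have "hascol ((Rel True OO Rel False) ^^ t)" if "t \<ge> Suc T" for t
    proof -
      obtain u where u: "t = Suc u" "u \<ge> T" using \<open>t \<ge> Suc T\<close> by (cases t) auto
      have "hascol (Rel True OO (Rel False OO Rel True) ^^ u OO Rel False)"
        using T u by (intro hascol_left hascol_right Rel_serial) auto
      then show ?thesis unfolding u alt_pow .
    qed
    then show ?thesis using True by auto
  qed
  show ?thesis by (rule conv) (rule window[OF E2 E3])
qed

end

theorem proposition2:
  fixes A1 A2 :: "real^'n^'n"
  assumes "stochastic A1" "undirected A1" "stochastic A2" "undirected A2"
  defines "A \<equiv> (\<lambda>k::nat. if k = 1 then A1 else A2)"
  shows "(\<forall>\<sigma>::nat \<Rightarrow> nat. range \<sigma> \<subseteq> {1, 2} \<longrightarrow> consensus_under A \<sigma>) \<longleftrightarrow>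
         (consensus_under A (\<lambda>_. 1) \<and> consensus_under A (\<lambda>_. 2) \<and>
          consensus_under A (\<lambda>t. if even t then 1 else 2))"
proof -
  interpret two_mat A1 A2 using assms(1-4) by unfold_locales
  have AE: "A = AN" unfolding A_def AN_def by simp
  show ?thesis
  proof
    assume H: "\<forall>\<sigma>::nat \<Rightarrow> nat. range \<sigma> \<subseteq> {1, 2} \<longrightarrow> consensus_under A \<sigma>"
    have "range (\<lambda>t::nat. if even t then 1 else (2::nat)) \<subseteq> {1, 2}" by auto
    then show "consensus_under A (\<lambda>_. 1) \<and> consensus_under A (\<lambda>_. 2) \<and>
          consensus_under A (\<lambda>t. if even t then 1 else 2)"
      using H by auto
  next
    assume "consensus_under A (\<lambda>_. 1) \<and> consensus_under A (\<lambda>_. 2) \<and>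
          consensus_under A (\<lambda>t. if even t then 1 else 2)"
    then show "\<forall>\<sigma>::nat \<Rightarrow> nat. range \<sigma> \<subseteq> {1, 2} \<longrightarrow> consensus_under A \<sigma>"
      unfolding AE using main by blast
  qed
qed

end
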